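(* $P(2,3)=3$, and $P(2^k,3)=6$ for every integer $k>1$.
   Context: For positive integers $m,n$, let $\mathbf{Z}_m$ be the integers modulo $m$ and $T:\mathbf{Z}_m^n\to\mathbf{Z}_m^n$, $T(a_0,\dots,a_{n-1})=(a_0+a_1,a_1+a_2,\dots,a_{n-1}+a_0)$. For $\mathbf{a}\in\mathbf{Z}_m^n$ the cycle length of $(T^k\mathbf{a})_{k\ge0}$ is the smallest positive integer $P$ such that there is $N$ with $T^{k+P}\mathbf{a}=T^k\mathbf{a}$ for all $k\ge N$. $P(m,n)$ denotes the maximum of these cycle lengths over all $\mathbf{a}\in\mathbf{Z}_m^n$. *)

theory Defs
  imports Main
begin

text \<open>Elements of Z_m^n are represented as functions a :: nat => nat with
  a i < m for i < n (the residues 0..m-1) and a i = 0 for i >= n.\<close>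

definition vecs :: "nat \<Rightarrow> nat \<Rightarrow> (nat \<Rightarrow> nat) set" where
  "vecs m n = {a. (\<forall>i<n. a i < m) \<and> (\<forall>i\<ge>n. a i = 0)}"

definition T :: "nat \<Rightarrow> nat \<Rightarrow> (nat \<Rightarrow> nat) \<Rightarrow> (nat \<Rightarrow> nat)" where
  "T m n a = (\<lambda>i. if i < n then (a i + a ((i + 1) mod n)) mod m else 0)"

definition cycle_len :: "nat \<Rightarrow> nat \<Rightarrow> (nat \<Rightarrow> nat) \<Rightarrow> nat" where
  "cycle_len m n a = (LEAST p. 0 < p \<and> (\<exists>N. \<forall>k\<ge>N. (T m n ^^ (k + p)) a = (T m n ^^ k) a))"

definition Pmax :: "nat \<Rightarrow> nat \<Rightarrow> nat" where
  "Pmax m n = Max (cycle_len m n ` vecs m n)"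

end

theory Submission
  imports Defs
begin

definition U :: "(nat \<Rightarrow> nat) \<Rightarrow> (nat \<Rightarrow> nat)" where
  "U a = (\<lambda>i. if i < 3 then a i + a ((i + 1) mod 3) else 0)"

lemma U0[simp]: "U a 0 = a 0 + a (Suc 0)" and U1[simp]: "U a (Suc 0) = a (Suc 0) + a 2"
  and U2[simp]: "U a 2 = a 2 + a 0"
  by (simp_all add: U_def numeral_2_eq_2)

lemma TU:
  assumes "a \<in> vecs m 3" "m > 0"
  shows "(T m 3 ^^ j) a = (\<lambda>i. if i < 3 then (U ^^ j) a i mod m else 0)"
proof (induction j)
  case 0
  then show ?case using assms by (auto simp: vecs_def)
next
  case (Suc j)
  have "(T m 3 ^^ Suc j) a = T m 3 ((T m 3 ^^ j) a)" by simp
  also have "\<dots> = T m 3 (\<lambda>i. if i < 3 then (U ^^ j) a i mod m else 0)" using Suc.IH by simp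
  also have "\<dots> = (\<lambda>i. if i < 3 then (U ^^ Suc j) a i mod m else 0)"
    by (rule ext) (simp add: T_def U_def mod_add_eq)
  finally show ?case .
qed

lemma Usum: "(U ^^ j) a 0 + (U ^^ j) a (Suc 0) + (U ^^ j) a 2 = 2 ^ j * (a 0 + a (Suc 0) + a 2)"
  by (induction j) auto

lemma U6e: "(U ^^ 6) a = U (U (U (U (U (U a)))))"
  by (simp add: numeral_eq_Suc)

lemma U3e: "(U ^^ 3) a = U (U (U a))"
  by (simp add: numeral_eq_Suc)

lemma U6: "(U ^^ 6) a i = a i + 21 * (a 0 + a (Suc 0) + a 2)" if "i < 3"
proof -
  have c: "i = 0 \<or> i = Suc 0 \<or> i = 2" using that by auto
  have "(U ^^ 6) a 0 = a 0 + 21 * (a 0 + a (Suc 0) + a 2)"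
    unfolding U6e by (simp only: U0 U1 U2) simp
  moreover have "(U ^^ 6) a (Suc 0) = a (Suc 0) + 21 * (a 0 + a (Suc 0) + a 2)"
    unfolding U6e by (simp only: U0 U1 U2) simp
  moreover have "(U ^^ 6) a 2 = a 2 + 21 * (a 0 + a (Suc 0) + a 2)"
    unfolding U6e by (simp only: U0 U1 U2) simp
  ultimately show ?thesis using c by (elim disjE) simp_all
qed

lemma U3: "(U ^^ 3) a i + a i = 3 * (a 0 + a (Suc 0) + a 2)" if "i < 3"
proof -
  have c: "i = 0 \<or> i = Suc 0 \<or> i = 2" using that by auto
  have "(U ^^ 3) a 0 + a 0 = 3 * (a 0 + a (Suc 0) + a 2)"
    unfolding U3e by (simp only: U0 U1 U2) simp
  moreover have "(U ^^ 3) a (Suc 0) + a (Suc 0) = 3 * (a 0 + a (Suc 0) + a 2)"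
    unfolding U3e by (simp only: U0 U1 U2) simp
  moreover have "(U ^^ 3) a 2 + a 2 = 3 * (a 0 + a (Suc 0) + a 2)"
    unfolding U3e by (simp only: U0 U1 U2) simp
  ultimately show ?thesis using c by (elim disjE) simp_all
qed

lemma U6j: "(U ^^ (j + 6)) a i = (U ^^ j) a i + 21 * 2 ^ j * (a 0 + a (Suc 0) + a 2)" if "i < 3"
proof -
  have "(U ^^ (j + 6)) a i = (U ^^ 6) ((U ^^ j) a) i" by (metis add.commute comp_apply funpow_add)
  also have "\<dots> = (U ^^ j) a i + 21 * ((U ^^ j) a 0 + (U ^^ j) a (Suc 0) + (U ^^ j) a 2)"
    using U6[OF that] by blast
  also have "\<dots> = (U ^^ j) a i + 21 * 2 ^ j * (a 0 + a (Suc 0) + a 2)"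
    by (simp only: Usum mult.assoc)
  finally show ?thesis .
qed

lemma U3j: "(U ^^ (j + 3)) a i + (U ^^ j) a i = 3 * 2 ^ j * (a 0 + a (Suc 0) + a 2)" if "i < 3"
proof -
  have "(U ^^ (j + 3)) a i = (U ^^ 3) ((U ^^ j) a) i" by (metis add.commute comp_apply funpow_add)
  then show ?thesis using U3[OF that, of "(U ^^ j) a"] Usum by simp
qed

lemma cycle_le:
  assumes "\<forall>k\<ge>N. (T m n ^^ (k + p)) a = (T m n ^^ k) a" "0 < p"
  shows "cycle_len m n a \<le> p"
  unfolding cycle_len_def by (rule Least_le) (use assms in blast)

lemma cycle_ge:
  assumes "\<forall>k\<ge>N. (T m n ^^ (k + q)) a = (T m n ^^ k) a" "0 < q"
    and "\<And>p N. 0 < p \<Longrightarrow> p < q \<Longrightarrow> \<not> (\<forall>k\<ge>N. (T m n ^^ (k + p)) a = (T m n ^^ k) a)"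
  shows "q \<le> cycle_len m n a"
proof -
  have ex: "\<exists>p. 0 < p \<and> (\<exists>N. \<forall>k\<ge>N. (T m n ^^ (k + p)) a = (T m n ^^ k) a)"
    using assms(1,2) by blast
  show ?thesis unfolding cycle_len_def
    using LeastI_ex[OF ex] assms(3) by (meson not_less)
qed

lemma reduce:
  fixes f :: "nat \<Rightarrow> nat" and j0 q N r d :: nat
  assumes "\<And>j. j \<ge> j0 \<Longrightarrow> f (j + q) mod d = f j mod (d::nat)"
  shows "f (j0 + q * N + r) mod d = f (j0 + r) mod d"
proof (induction N)
  case 0 then show ?case by simp
next
  case (Suc N)
  have "f (j0 + q * Suc N + r) = f ((j0 + q * N + r) + q)" by (simp add: algebra_simps)
  then show ?case using assms[of "j0 + q * N + r"] Suc by simp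
qed

definition a0 :: "nat \<Rightarrow> nat" where "a0 = (\<lambda>i. if i = 0 then 1 else 0)"

lemma a0_vecs: "m > 1 \<Longrightarrow> a0 \<in> vecs m 3"
  by (auto simp: vecs_def a0_def)

lemma a0v[simp]: "a0 0 = 1" "a0 1 = 0" "a0 (Suc 0) = 0" "a0 2 = 0" by (auto simp: a0_def)

lemma finite_vecs: "finite (vecs m n)"
proof -
  have "vecs m n \<subseteq> {f. \<forall>x. (x \<in> {..<n} \<longrightarrow> f x \<in> {..<m}) \<and> (x \<notin> {..<n} \<longrightarrow> f x = 0)}"
    by (auto simp: vecs_def)
  moreover have "finite {f. \<forall>x. (x \<in> {..<n} \<longrightarrow> f x \<in> {..<m}) \<and> (x \<notin> {..<n} \<longrightarrow> (f x :: nat) = 0)}"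
    by (rule finite_set_of_finite_funs) auto
  ultimately show ?thesis by (rule finite_subset)
qed


lemma upper:
  assumes "m > 0" "a \<in> vecs m 3"
    and "\<And>i j. i < 3 \<Longrightarrow> j \<ge> j0 \<Longrightarrow> (U ^^ (j + q)) a i mod m = (U ^^ j) a i mod m"
  shows "\<forall>k\<ge>j0. (T m 3 ^^ (k + q)) a = (T m 3 ^^ k) a"
  using assms by (auto simp: TU)

lemma lower:
  assumes "m > 0" "a0 \<in> vecs m 3" "d dvd m" "q > 0"
    and hyp: "\<And>i j. i < 3 \<Longrightarrow> j \<ge> j0 \<Longrightarrow> (U ^^ (j + q)) a0 i mod d = (U ^^ j) a0 i mod d"
    and dist: "\<And>p. 0 < p \<Longrightarrow> p < q \<Longrightarrow> \<exists>i<3. (U ^^ (j0 + p)) a0 i mod d \<noteq> (U ^^ j0) a0 i mod d"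
    and p: "0 < p" "p < q"
  shows "\<not> (\<forall>k\<ge>N. (T m 3 ^^ (k + p)) a0 = (T m 3 ^^ k) a0)"
proof
  assume H: "\<forall>k\<ge>N. (T m 3 ^^ (k + p)) a0 = (T m 3 ^^ k) a0"
  define j where "j = j0 + q * N"
  have "N \<le> q * N" using \<open>q > 0\<close> by (cases q) auto
  then have "j \<ge> N" unfolding j_def by linarith
  then have E: "(T m 3 ^^ (j + p)) a0 = (T m 3 ^^ j) a0" using H by blast
  obtain i where i: "i < 3" "(U ^^ (j0 + p)) a0 i mod d \<noteq> (U ^^ j0) a0 i mod d"
    using dist p by blast
  have "(U ^^ (j + p)) a0 i mod m = (U ^^ j) a0 i mod m"
    using fun_cong[OF E, of i] i(1) by (simp add: TU[OF assms(2,1)])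
  then have "(U ^^ (j + p)) a0 i mod m mod d = (U ^^ j) a0 i mod m mod d" by simp
  then have 1: "(U ^^ (j + p)) a0 i mod d = (U ^^ j) a0 i mod d"
    using assms(3) by (simp add: mod_mod_cancel)
  have 2: "(U ^^ (j0 + q * N + p)) a0 i mod d = (U ^^ (j0 + p)) a0 i mod d"
    by (rule reduce[where f = "\<lambda>j. (U ^^ j) a0 i"]) (rule hyp[OF i(1)])
  have 3: "(U ^^ (j0 + q * N + 0)) a0 i mod d = (U ^^ (j0 + 0)) a0 i mod d"
    by (rule reduce[where f = "\<lambda>j. (U ^^ j) a0 i"]) (rule hyp[OF i(1)])
  show False using 1 2 3 i(2) unfolding j_def by simp
qed

lemma Pmax_eq:
  assumes "m > 1" "q > 0"
    and up: "\<And>a i j. a \<in> vecs m 3 \<Longrightarrow> i < 3 \<Longrightarrow> j \<ge> j0 \<Longrightarrow> (U ^^ (j + q)) a i mod m = (U ^^ j) a i mod m"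
    and "d dvd m"
    and hyp: "\<And>i j. i < 3 \<Longrightarrow> j \<ge> j1 \<Longrightarrow> (U ^^ (j + q)) a0 i mod d = (U ^^ j) a0 i mod d"
    and dist: "\<And>p. 0 < p \<Longrightarrow> p < q \<Longrightarrow> \<exists>i<3. (U ^^ (j1 + p)) a0 i mod d \<noteq> (U ^^ j1) a0 i mod d"
  shows "Pmax m 3 = q"
  unfolding Pmax_def
proof (rule Max_eqI)
  show "finite (cycle_len m 3 ` vecs m 3)" using finite_vecs by simp
  have m0: "m > 0" using assms by simp
  show "y \<le> q" if "y \<in> cycle_len m 3 ` vecs m 3" for y
    using that cycle_le[OF upper[OF m0 _ up] \<open>q > 0\<close>] by blast
  have a0v: "a0 \<in> vecs m 3" using a0_vecs assms by simp
  have up0: "\<forall>k\<ge>j0. (T m 3 ^^ (k + q)) a0 = (T m 3 ^^ k) a0"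
    by (rule upper[OF m0 a0v up[OF a0v]])
  have "cycle_len m 3 a0 = q"
  proof (rule antisym)
    show "cycle_len m 3 a0 \<le> q" using cycle_le[OF up0 \<open>q > 0\<close>] .
    show "q \<le> cycle_len m 3 a0"
      by (rule cycle_ge[OF up0 \<open>q > 0\<close>])
        (rule lower[OF m0 a0v \<open>d dvd m\<close> \<open>q > 0\<close> hyp dist])
  qed
  then show "q \<in> cycle_len m 3 ` vecs m 3" using a0v by force
qed

lemma per6: "i < 3 \<Longrightarrow> j \<ge> k \<Longrightarrow> (U ^^ (j + 6)) a i mod 2 ^ k = (U ^^ j) a i mod 2 ^ k"
proof -
  assume i: "i < 3" and jk: "j \<ge> k"
  have "(2::nat) ^ k dvd 2 ^ j" using jk by (simp add: le_imp_power_dvd)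
  then have "2 ^ k dvd 21 * 2 ^ j * (a 0 + a (Suc 0) + a 2)" by (simp add: dvd_mult)
  then obtain t where t: "21 * 2 ^ j * (a 0 + a (Suc 0) + a 2) = 2 ^ k * t" by (elim dvdE)
  show ?thesis unfolding U6j[OF i, of j a] t by simp
qed
lemma e1: "even ((x::nat) + y) \<Longrightarrow> x mod 2 = y mod 2" by presburger
lemma e2: "(j::nat) \<ge> 1 \<Longrightarrow> even (3 * 2 ^ j * (s::nat))" by (cases j) auto

lemma per3: "i < 3 \<Longrightarrow> j \<ge> 1 \<Longrightarrow> (U ^^ (j + 3)) a i mod 2 = (U ^^ j) a i mod 2"
proof -
  assume i: "i < 3" and jk: "j \<ge> 1"
  have "even (3 * 2 ^ j * (a 0 + a (Suc 0) + a 2))" using e2[OF jk] .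
  then have "even ((U ^^ (j + 3)) a i + (U ^^ j) a i)" by (simp only: U3j[OF i])
  then show ?thesis by (rule e1)
qed
lemma Ustep: "(U ^^ Suc n) a = U ((U ^^ n) a)" by simp

lemma tab0: "(U ^^ 0) a0 0 = 1 \<and> (U ^^ 0) a0 (Suc 0) = 0 \<and> (U ^^ 0) a0 2 = 0" by simp
lemma tab1: "(U ^^ 1) a0 0 = 1 \<and> (U ^^ 1) a0 (Suc 0) = 0 \<and> (U ^^ 1) a0 2 = 1"
proof -
  have e: "(U ^^ 1) a0 = U ((U ^^ 0) a0)" by simp
  show ?thesis unfolding e U0 U1 U2 using tab0 by simp
qed
lemma tab2: "(U ^^ 2) a0 0 = 1 \<and> (U ^^ 2) a0 (Suc 0) = 1 \<and> (U ^^ 2) a0 2 = 2"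
proof -
  have e: "(U ^^ 2) a0 = U ((U ^^ 1) a0)" using Ustep[of 1 a0] by (simp add: numeral_2_eq_2 del: funpow.simps)
  show ?thesis unfolding e U0 U1 U2 using tab1 by simp
qed
lemma tab3: "(U ^^ 3) a0 0 = 2 \<and> (U ^^ 3) a0 (Suc 0) = 3 \<and> (U ^^ 3) a0 2 = 3"
proof -
  have e: "(U ^^ 3) a0 = U ((U ^^ 2) a0)" using Ustep[of 2 a0] by (simp del: funpow.simps)
  show ?thesis unfolding e U0 U1 U2 using tab2 by simp
qed
lemma tab4: "(U ^^ 4) a0 0 = 5 \<and> (U ^^ 4) a0 (Suc 0) = 6 \<and> (U ^^ 4) a0 2 = 5"
proof -
  have e: "(U ^^ 4) a0 = U ((U ^^ 3) a0)" using Ustep[of 3 a0] by (simp del: funpow.simps)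
  show ?thesis unfolding e U0 U1 U2 using tab3 by simp
qed
lemma tab5: "(U ^^ 5) a0 0 = 11 \<and> (U ^^ 5) a0 (Suc 0) = 11 \<and> (U ^^ 5) a0 2 = 10"
proof -
  have e: "(U ^^ 5) a0 = U ((U ^^ 4) a0)" using Ustep[of 4 a0] by (simp del: funpow.simps)
  show ?thesis unfolding e U0 U1 U2 using tab4 by simp
qed
lemma tab6: "(U ^^ 6) a0 0 = 22 \<and> (U ^^ 6) a0 (Suc 0) = 21 \<and> (U ^^ 6) a0 2 = 21"
proof -
  have e: "(U ^^ 6) a0 = U ((U ^^ 5) a0)" using Ustep[of 5 a0] by (simp del: funpow.simps)
  show ?thesis unfolding e U0 U1 U2 using tab5 by simp
qed
lemma tab7: "(U ^^ 7) a0 0 = 43 \<and> (U ^^ 7) a0 (Suc 0) = 42 \<and> (U ^^ 7) a0 2 = 43"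
proof -
  have e: "(U ^^ 7) a0 = U ((U ^^ 6) a0)" using Ustep[of 6 a0] by (simp del: funpow.simps)
  show ?thesis unfolding e U0 U1 U2 using tab6 by simp
qed

lemma dist4: "0 < p \<Longrightarrow> p < 6 \<Longrightarrow> \<exists>i<3. (U ^^ (2 + p)) a0 i mod 4 \<noteq> (U ^^ 2) a0 i mod 4"
proof -
  assume "0 < p" "p < 6"
  then have c: "p = 1 \<or> p = 2 \<or> p = 3 \<or> p = 4 \<or> p = 5" by auto
  have "?thesis" if "p = 1" using that tab2 tab3 by (intro exI[of _ 0]) simp
  moreover have "?thesis" if "p = 2" using that tab2 tab4 by (intro exI[of _ "Suc 0"]) simp
  moreover have "?thesis" if "p = 3" using that tab2 tab5 by (intro exI[of _ 0]) simp
  moreover have "?thesis" if "p = 4" using that tab2 tab6 by (intro exI[of _ 0]) simp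
  moreover have "?thesis" if "p = 5" using that tab2 tab7 by (intro exI[of _ 0]) simp
  ultimately show ?thesis using c by blast
qed

lemma dist2: "0 < p \<Longrightarrow> p < 3 \<Longrightarrow> \<exists>i<3. (U ^^ (1 + p)) a0 i mod 2 \<noteq> (U ^^ 1) a0 i mod 2"
proof -
  assume "0 < p" "p < 3"
  then have c: "p = 1 \<or> p = 2" by auto
  have "?thesis" if "p = 1" using that tab1 tab2 by (intro exI[of _ 2]) simp
  moreover have "?thesis" if "p = 2" using that tab1 tab3 by (intro exI[of _ 0]) simp
  ultimately show ?thesis using c by blast
qed

theorem proposition5p2:
  shows "Pmax 2 3 = 3 \<and> (\<forall>k::nat. k > 1 \<longrightarrow> Pmax (2 ^ k) 3 = 6)"
proof
  show "Pmax 2 3 = 3"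
    using Pmax_eq[of 2 3 1 2 1, OF _ _ per3 _ per3 dist2] by simp
  show "\<forall>k::nat. k > 1 \<longrightarrow> Pmax (2 ^ k) 3 = 6"
  proof (intro allI impI)
    fix k :: nat assume k: "k > 1"
    have m: "(2::nat) ^ k > 1" using k by (metis one_less_power less_trans zero_less_one one_less_numeral_iff semiring_norm(76))
    have "(4::nat) dvd 2 ^ k"
      using le_imp_power_dvd[of 2 k "2::nat"] k by simp
    moreover have h4: "(U ^^ (j + 6)) a0 i mod 4 = (U ^^ j) a0 i mod 4" if "i < 3" "j \<ge> 2" for i j
      using per6[OF that, of a0] by simp
    moreover have up: "(U ^^ (j + 6)) a i mod 2 ^ k = (U ^^ j) a i mod 2 ^ k"
      if "a \<in> vecs (2 ^ k) 3" "i < 3" "j \<ge> k" for a i j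
      using per6[OF that(2,3)] .
    ultimately show "Pmax (2 ^ k) 3 = 6"
      using Pmax_eq[of "2 ^ k" 6 k 4 2, OF m _ up _ h4 dist4] by simp
  qed
qed

end
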